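(* (Perfect completeness of the Five Cells protocol.) Let a Five Cells puzzle on an $m\times n$ grid be given. If the prover $P$ knows a solution of the puzzle and follows the Five Cells zero-knowledge protocol described in the context, then the verifier $V$ always accepts.
   Context: Five Cells puzzle: an $m\times n$ rectangular grid in which some cells contain a number. A solution is a partition of the grid into pentominoes (connected sets of 5 cells; a pentomino obtained from another by rotation or reflection counts as a different type, giving 63 types) such that for every numbered cell, the number equals the number of that cell's four edges which are borders of pentominoes (edges on the outer boundary of the grid count as borders). Labelling every cell with this count gives the "extended solution". Cards: each card has either an integer or nothing (a blank card) on its front; all backs are indistinguishable. A pile-shifting shuffle applied to a matrix of face-down cards (each entry may be a stack, all stacks in a row of equal size) cyclically shifts its columns by a uniformly random amount unknown to everyone. Chosen cut protocol: given face-down cards (or equal-size stacks) $c_1,\dots,c_q$ and a secret index $i$ chosen by $P$, $P$ forms a $3\times q$ matrix with row 1 equal to $c_1,\dots,c_q$, row 2 a face-down card $1$ in column $i$ and $0$ elsewhere, row 3 a card $1$ in column 1 and $0$ elsewhere (turned face-down); a pile-shifting shuffle is applied; row 2 is revealed and the card of row 1 above the $1$ is $c_i$; after $c_i$ has been used it is put back in place, all face-up cards are turned face-down, another pile-shifting shuffle is applied, row 3 is revealed and the columns are cyclically shifted so that its $1$ returns to column 1, restoring the original order. Printing protocol: given a face-down $p\times q$ template and a face-down $p\times q$ area of cards, each template card is placed on the corresponding area card, forming $pq$ stacks of two; for each stack, $P$ uses the chosen cut protocol to select one of its two cards, the selected card is revealed, $V$ rejects unless it is blank, and it is removed. Five Cells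 protocol: $P$ publicly puts a blank card on every cell, appends 4 rows and 4 columns of blank "dummy" cards below and to the right, and turns all cards face-down, giving an $(m+4)\times(n+4)$ matrix, read row by row as a sequence $a_1,a_2,\dots$ (so the card below $a_j$ is $a_{j+n+4}$). $P$ builds 63 templates, one per pentomino type: a $5\times5$ matrix with the pentomino at the top-left, each of its cells a card with the number of that cell's edges which are borders of the pentomino, all other cards blank; $V$ checks all templates. Let $B_1,\dots,B_k$ ($k=mn/5$) be the pentominoes of $P$'s solution. For $i=1,\dots,k$: (1) using the chosen cut protocol on the sequence, $P$ selects the top-left card of a $5\times5$ area (cards at positions $j+r(n+4)+c$, $0\le r,c\le 4$) containing $B_i$ in the same position as in its template; (2) using the chosen cut protocol, $P$ selects the template of $B_i$'s type; (3) the printing protocol is applied to this template and area; (4) $P$ reconstructs the used template and returns it to the pile, and $V$ checks again that all 63 templates are correct (rejecting otherwise). Finally $P$ reveals the cards on the originally numbered cells and $V$ rejects unless they match the given numbers; $P$ reveals all dummy cards and $V$ rejects unless they are blank. Otherwise $V$ accepts. *)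

theory Defs
  imports Main
begin

type_synonym cell = "int \<times> int"

definition grid :: "nat \<Rightarrow> nat \<Rightarrow> cell set" where
  "grid m n = {(r, c). 0 \<le> r \<and> r < int m \<and> 0 \<le> c \<and> c < int n}"

definition nbrs :: "cell \<Rightarrow> cell set" where
  "nbrs x = (case x of (r, c) \<Rightarrow> {(r - 1, c), (r + 1, c), (r, c - 1), (r, c + 1)})"

definition connected_cells :: "cell set \<Rightarrow> bool" where
  "connected_cells S \<longleftrightarrow> S \<noteq> {} \<and>
     (\<forall>x\<in>S. \<forall>y\<in>S. (x, y) \<in> ({(a, b). a \<in> S \<and> b \<in> S \<and> b \<in> nbrs a})\<^sup>*)"

definition pentomino :: "cell set \<Rightarrow> bool" where
  "pentomino S \<longleftrightarrow> finite S \<and> card S = 5 \<and> connected_cells S"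

text \<open>Pentomino types: translation classes of pentominoes (rotations/reflections are
different types), represented by the normalised member whose minimal row and minimal
column are 0 (the pentomino placed at the top-left).\<close>

definition norm_pent :: "cell set \<Rightarrow> cell set" where
  "norm_pent B = (\<lambda>(r, c). (r - Min (fst ` B), c - Min (snd ` B))) ` B"

definition pent_types :: "cell set set" where
  "pent_types = {T. pentomino T \<and> Min (fst ` T) = 0 \<and> Min (snd ` T) = 0}"

text \<open>Number of edges of cell x that are borders of pentominoes of the partition Ps:
an edge is not a border iff both of its cells lie in the same pentomino (edges on the
outer boundary of the grid are borders).\<close>

definition border_count :: "cell set set \<Rightarrow> cell \<Rightarrow> nat" where
  "border_count Ps x = card {y \<in> nbrs x. \<not> (\<exists>B\<in>Ps. x \<in> B \<and> y \<in> B)}"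

definition is_solution :: "nat \<Rightarrow> nat \<Rightarrow> (cell \<Rightarrow> nat option) \<Rightarrow> cell set set \<Rightarrow> bool" where
  "is_solution m n clue Ps \<longleftrightarrow>
     (\<forall>B\<in>Ps. pentomino B) \<and>
     (\<forall>B\<in>Ps. \<forall>B'\<in>Ps. B \<noteq> B' \<longrightarrow> B \<inter> B' = {}) \<and>
     \<Union>Ps = grid m n \<and>
     (\<forall>x k. clue x = Some k \<longrightarrow> border_count Ps x = k)"

text \<open>A card shows an integer or is blank (None).\<close>

type_synonym card = "int option"

text \<open>Pile-shifting shuffle by amount s: the column at index j moves to index (j+s) mod q.\<close>

definition shiftR :: "nat \<Rightarrow> 'a list \<Rightarrow> 'a list" where
  "shiftR s xs = rotate (length xs - s mod length xs) xs"

definition marker :: "nat \<Rightarrow> nat \<Rightarrow> card list" where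
  "marker k q = map (\<lambda>j. if j = k then Some 1 else Some 0) [0..<q]"

definition reveal1 :: "card list \<Rightarrow> nat" where
  "reveal1 xs = hd (filter (\<lambda>j. xs ! j = Some 1) [0..<length xs])"

text \<open>The function use receives the revealed position p and the shuffled row 1
(whose card at p is the selected one) and returns the row after using the card,
together with some result.  Afterwards the original order is restored.\<close>

definition chosen_cut ::
  "nat \<Rightarrow> nat \<Rightarrow> nat \<Rightarrow> 'a list \<Rightarrow> (nat \<Rightarrow> 'a list \<Rightarrow> 'a list \<times> 'b) \<Rightarrow> 'a list \<times> 'b" where
  "chosen_cut s1 s2 i cs use =
    (let q = length cs;
         row1 = shiftR s1 cs;
         row2 = shiftR s1 (marker i q);
         row3 = shiftR s1 (marker 0 q);
         p = reveal1 row2;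
         (row1', res) = use p row1;
         row1'' = shiftR s2 row1';
         row3' = shiftR s2 row3;
         k = reveal1 row3'
     in (shiftR (q - k) row1'', res))"

text \<open>Printing of one stack (template card tc on area card ac).  The selected card is
revealed (V requires it to be blank) and removed (None); the remaining card stays.\<close>

definition print_stack :: "nat \<Rightarrow> nat \<Rightarrow> card \<Rightarrow> card \<Rightarrow> card \<times> bool" where
  "print_stack s1 s2 tc ac =
    (let i = (if tc = None then 0 else 1);
         (st, ok) = chosen_cut s1 s2 i [Some tc, Some ac]
                      (\<lambda>p row. (row[p := None], row ! p = Some None))
     in (the (hd (filter (\<lambda>x. x \<noteq> None) st)), ok))"

text \<open>Printing protocol: template T (5x5, row-major, 25 cards) onto the 5x5 area of the
(shuffled) sequence xs whose top-left card is at position p; w = n + 4 is the row length.\<close>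

definition print_area ::
  "(nat \<Rightarrow> nat) \<Rightarrow> nat \<Rightarrow> card list \<Rightarrow> nat \<Rightarrow> card list \<Rightarrow> card list \<times> bool" where
  "print_area rho w T p xs =
    fold (\<lambda>k (ys, ok).
           let a = (p + (k div 5) * w + k mod 5) mod length ys;
               (c, ok') = print_stack (rho (4 + 2 * k)) (rho (5 + 2 * k)) (T ! k) (ys ! a)
           in (ys[a := c], ok \<and> ok'))
      [0..<25] (xs, True)"

definition tmpl :: "cell set \<Rightarrow> card list" where
  "tmpl T = map (\<lambda>k. let x = (int (k div 5), int (k mod 5)) in
                   if x \<in> T then Some (int (card {y \<in> nbrs x. y \<notin> T})) else None)
              [0..<25]"

definition topleft :: "nat \<Rightarrow> cell set \<Rightarrow> nat" where
  "topleft w B = nat (Min (fst ` B)) * w + nat (Min (snd ` B))"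

definition tidx :: "cell set list \<Rightarrow> cell set \<Rightarrow> nat" where
  "tidx ts T = hd (filter (\<lambda>k. ts ! k = T) [0..<length ts])"

definition templates_ok :: "cell set list \<Rightarrow> card list list \<Rightarrow> bool" where
  "templates_ok ts pile \<longleftrightarrow> length pile = length ts \<and> (\<forall>k < length ts. pile ! k = tmpl (ts ! k))"

definition five_cells_round ::
  "cell set list \<Rightarrow> nat \<Rightarrow> (nat \<Rightarrow> nat) \<Rightarrow> nat \<Rightarrow> nat \<Rightarrow> card list \<times> card list list
     \<Rightarrow> (card list \<times> card list list) \<times> bool" where
  "five_cells_round ts w rho j ti st =
    (case st of (xs, pile) \<Rightarrow>
      let useA = (\<lambda>p row.
             let (pile', (row', ok)) =
                   chosen_cut (rho 2) (rho 3) ti pile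
                     (\<lambda>p' prow. (prow[p' := []], print_area rho w (prow ! p') p row))
             in (row', (pile', ok)));
          (xs', (pile', ok)) = chosen_cut (rho 0) (rho 1) j xs useA;
          pile'' = pile'[ti := tmpl (ts ! ti)]
      in ((xs', pile''), ok \<and> templates_ok ts pile''))"

text \<open>Whole protocol with the honest prover who knows the solution and processes its
pentominoes in the order Bs; R i is the randomness of round i.  Returns whether V accepts.\<close>

definition five_cells_accepts ::
  "nat \<Rightarrow> nat \<Rightarrow> (cell \<Rightarrow> nat option) \<Rightarrow> cell set list \<Rightarrow> cell set list
     \<Rightarrow> (nat \<Rightarrow> nat \<Rightarrow> nat) \<Rightarrow> bool" where
  "five_cells_accepts m n clue ts Bs R =
    (let w = n + 4;
         L = (m + 4) * w;
         pile0 = map tmpl ts;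
         step = (\<lambda>(i, B) (st, ok).
                   let (st', ok') = five_cells_round ts w (R i) (topleft w B) (tidx ts (norm_pent B)) st
                   in (st', ok \<and> ok'));
         ((xs, pile), ok) = fold step (zip [0..<length Bs] Bs)
                              ((replicate L None, pile0), templates_ok ts pile0)
     in ok \<and>
        (\<forall>q < L. let r = q div w; c = q mod w in
           if r < m \<and> c < n
           then (case clue (int r, int c) of None \<Rightarrow> True | Some v \<Rightarrow> xs ! q = Some (int v))
           else xs ! q = None))"

end

theory Submission
  imports Defs
begin


lemma mod_key: "0 < (q::nat) \<Longrightarrow> (x + s + (q - s mod q)) mod q = x mod q"
proof -
  assume q: "0 < q"
  have lt: "s mod q < q" using q by simp
  have e: "s = q * (s div q) + s mod q" by simp
  have h: "x + s + (q - s mod q) = (x + q) + q * (s div q)" using e lt by linarith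
  show ?thesis unfolding h by simp
qed

lemma len_shiftR[simp]: "length (shiftR s xs) = length xs"
  by (simp add: shiftR_def)

lemma shiftR_nth_gen: "k < length xs \<Longrightarrow> shiftR s xs ! k = xs ! ((k + (length xs - s mod length xs)) mod length xs)"
  by (simp add: shiftR_def nth_rotate add.commute)

lemma idx_iff:
  assumes "k < q" "i < (q::nat)"
  shows "((k + (q - s mod q)) mod q = i) \<longleftrightarrow> (k = (i + s) mod q)"
proof
  assume h: "(k + (q - s mod q)) mod q = i"
  have "(i + s) mod q = ((k + (q - s mod q)) mod q + s) mod q" using h by simp
  also have "\<dots> = (s + (k + (q - s mod q))) mod q" by (simp add: mod_add_left_eq mod_add_right_eq add.commute)
  also have "\<dots> = (k + s + (q - s mod q)) mod q" by (simp add: ac_simps)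
  also have "\<dots> = k" using assms mod_key[of q k s] by simp
  finally show "k = (i + s) mod q" by simp
next
  assume h: "k = (i + s) mod q"
  have "(k + (q - s mod q)) mod q = (i + s + (q - s mod q)) mod q" using h by (simp add: mod_add_left_eq)
  also have "\<dots> = i" using assms mod_key[of q i s] by simp
  finally show "(k + (q - s mod q)) mod q = i" .
qed

lemma shiftR_nth: "i < length xs \<Longrightarrow> shiftR s xs ! ((i + s) mod length xs) = xs ! i"
proof -
  assume i: "i < length xs"
  then have q: "0 < length xs" by linarith
  have "shiftR s xs ! ((i + s) mod length xs) = xs ! (((i + s) mod length xs + (length xs - s mod length xs)) mod length xs)"
    using q by (simp add: shiftR_nth_gen)
  also have "((i + s) mod length xs + (length xs - s mod length xs)) mod length xs = i"
    using idx_iff[of "(i + s) mod length xs" "length xs" i s] i q by simp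
  finally show ?thesis .
qed

lemma shiftR_update: "i < length xs \<Longrightarrow> shiftR s (xs[i := v]) = (shiftR s xs)[(i + s) mod length xs := v]"
proof (rule nth_equalityI)
  assume i: "i < length xs"
  show "length (shiftR s (xs[i := v])) = length ((shiftR s xs)[(i + s) mod length xs := v])" by simp
  fix k assume "k < length (shiftR s (xs[i := v]))"
  then have k: "k < length xs" by simp
  have "(k + (length xs - s mod length xs)) mod length xs < length xs" using k by (intro mod_less_divisor) linarith
  then show "shiftR s (xs[i := v]) ! k = (shiftR s xs)[(i + s) mod length xs := v] ! k"
    using k i idx_iff[of k "length xs" i s] by (auto simp: shiftR_nth_gen nth_list_update)
qed

lemma shiftR_add: "shiftR a (shiftR b xs) = shiftR (a + b) xs"
proof (cases "xs = []")
  case True then show ?thesis by (simp add: shiftR_def)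
next
  case False
  define q where "q = length xs"
  have q: "0 < q" using False q_def by simp
  have "shiftR a (shiftR b xs) = rotate ((q - a mod q) + (q - b mod q)) xs"
    by (simp add: shiftR_def rotate_rotate q_def)
  also have "\<dots> = rotate (((q - a mod q) + (q - b mod q)) mod q) xs"
    by (metis q_def rotate_conv_mod)
  also have "((q - a mod q) + (q - b mod q)) mod q = (q - (a + b) mod q) mod q"
  proof -
    have "((q - a mod q) + (q - b mod q)) mod q = ((q - a mod q) + (q - b mod q) + (a + b) + (q - (a+b) mod q)) mod q"
      using mod_key[OF q, of "(q - a mod q) + (q - b mod q)" "a + b"] by (simp add: add.assoc)
    also have "(q - a mod q) + (q - b mod q) + (a + b) + (q - (a+b) mod q) = (q - (a+b) mod q) + ((a + (q - a mod q)) + (b + (q - b mod q)))"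
      by simp
    also have "((q - (a+b) mod q) + ((a + (q - a mod q)) + (b + (q - b mod q)))) mod q = (q - (a+b) mod q) mod q"
    proof -
      have "(0 + a + (q - a mod q)) mod q = 0" using mod_key[OF q, of 0 a] by simp
      moreover have "(0 + b + (q - b mod q)) mod q = 0" using mod_key[OF q, of 0 b] by simp
      ultimately have "q dvd (a + (q - a mod q))" "q dvd (b + (q - b mod q))" by (simp_all add: mod_eq_0_iff_dvd)
      then have "q dvd ((a + (q - a mod q)) + (b + (q - b mod q)))" by (rule dvd_add)
      then obtain kk where "(a + (q - a mod q)) + (b + (q - b mod q)) = q * kk" by (elim dvdE)
      then show ?thesis by simp
    qed
    finally show ?thesis .
  qed
  also have "rotate ((q - (a + b) mod q) mod q) xs = shiftR (a + b) xs"
    by (metis q_def rotate_conv_mod shiftR_def)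
  finally show ?thesis .
qed

lemma shiftR_id: "s mod length xs = 0 \<Longrightarrow> shiftR s xs = xs"
  by (simp add: shiftR_def)

lemma filter_single: "x < (q::nat) \<Longrightarrow> filter (\<lambda>j. j = x) [0..<q] = [x]"
proof (induction q)
  case 0 then show ?case by simp
next
  case (Suc q) then show ?case by (cases "x = q") (auto simp: filter_empty_conv)
qed

lemma length_marker[simp]: "length (marker i q) = q" by (simp add: marker_def)

lemma reveal_marker:
  assumes "i < q"
  shows "reveal1 (shiftR s (marker i q)) = (i + s) mod q"
proof -
  have "filter (\<lambda>j. shiftR s (marker i q) ! j = Some 1) [0..<q] = filter (\<lambda>j. j = (i + s) mod q) [0..<q]"
  proof (rule filter_cong[OF refl])
    fix j assume "j \<in> set [0..<q]"
    then have j: "j < q" by simp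
    have "(j + (q - s mod q)) mod q < q" using j by simp
    then show "(shiftR s (marker i q) ! j = Some 1) = (j = (i + s) mod q)"
      using j assms idx_iff[of j q i s] by (simp add: shiftR_nth_gen marker_def)
  qed
  moreover have "(i + s) mod q < q" using assms by simp
  ultimately show ?thesis by (simp add: reveal1_def filter_single)
qed

lemma chosen_cut_equiv:
  assumes q: "0 < length cs" "i < length cs"
    and u1: "use i cs = (G, r)"
    and u2: "use ((i + s1) mod length cs) (shiftR s1 cs) = (shiftR s1 G, r)"
    and lg: "length G = length cs"
  shows "chosen_cut s1 s2 i cs use = (G, r)"
proof -
  define q where "q = length cs"
  have r2: "reveal1 (shiftR s1 (marker i q)) = (i + s1) mod q" using reveal_marker q q_def by simp
  have r3: "reveal1 (shiftR s2 (shiftR s1 (marker 0 q))) = (s2 + s1) mod q"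
    using reveal_marker[of 0 q "s2 + s1"] q q_def by (simp add: shiftR_add)
  have "shiftR (q - (s2 + s1) mod q) (shiftR s2 (shiftR s1 G)) = shiftR (q - (s2 + s1) mod q + (s2 + (s1 :: nat))) G"
    by (simp add: shiftR_add add.assoc)
  also have "\<dots> = G"
  proof (rule shiftR_id)
    show "(q - (s2 + s1) mod q + (s2 + s1)) mod length G = 0"
      using mod_key[of q 0 "s2 + s1"] q q_def lg by (simp add: add.commute)
  qed
  finally have fin: "shiftR (q - (s2 + s1) mod q) (shiftR s2 (shiftR s1 G)) = G" .
  show ?thesis
    unfolding chosen_cut_def Let_def q_def[symmetric]
    using r2 r3 u2 fin q_def by (simp add: add.commute)
qed

lemma chosen_cut_upd:
  assumes q: "0 < length cs" "i < length cs"
    and u: "\<And>p row. use p row = (row[p := g (row ! p)], h (row ! p))"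
  shows "chosen_cut s1 s2 i cs use = (cs[i := g (cs ! i)], h (cs ! i))"
  by (rule chosen_cut_equiv) (use q in \<open>simp_all add: u shiftR_nth shiftR_update\<close>)

lemma print_stack_val: "print_stack s1 s2 tc ac = (if tc = None then (ac, True) else (tc, ac = None))"
proof -
  define i where "i = (if tc = None then 0 else 1::nat)"
  have "chosen_cut s1 s2 i [Some tc, Some ac] (\<lambda>p row. (row[p := None], row ! p = Some None))
        = ([Some tc, Some ac][i := None], [Some tc, Some ac] ! i = Some None)"
    by (rule chosen_cut_upd[where g = "\<lambda>_. None" and h = "\<lambda>c. c = Some None"]) (auto simp: i_def)
  then show ?thesis unfolding print_stack_def i_def[symmetric] Let_def
    by (cases "tc = None") (auto simp: i_def)
qed



definition tr :: "int \<Rightarrow> int \<Rightarrow> cell \<Rightarrow> cell" where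
  "tr a b = (\<lambda>(r, c). (r - a, c - b))"

lemma norm_pent_tr: "norm_pent B = tr (Min (fst ` B)) (Min (snd ` B)) ` B"
  by (simp add: norm_pent_def tr_def)

lemma inj_tr: "inj (tr a b)"
  by (auto simp: inj_def tr_def)

lemma tr_nbrs: "tr a b ` nbrs x = nbrs (tr a b x)"
  by (cases x) (auto simp: nbrs_def tr_def)

lemma tr_in_nbrs: "(tr a b y \<in> nbrs (tr a b x)) = (y \<in> nbrs x)"
  by (metis inj_image_mem_iff inj_tr tr_nbrs)

lemma connected_tr:
  assumes "connected_cells S"
  shows "connected_cells (tr a b ` S)"
proof -
  let ?E = "\<lambda>S. {(u, v). u \<in> S \<and> v \<in> S \<and> v \<in> nbrs u}"
  have *: "(tr a b x, tr a b y) \<in> (?E (tr a b ` S))\<^sup>*" if "(x, y) \<in> (?E S)\<^sup>*" for x y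
    using that
  proof (induction rule: rtrancl_induct)
    case base then show ?case by simp
  next
    case (step y z)
    then have "(tr a b y, tr a b z) \<in> ?E (tr a b ` S)" by (auto simp: tr_in_nbrs)
    with step.IH show ?case by (rule rtrancl_into_rtrancl)
  qed
  show ?thesis using assms unfolding connected_cells_def
    by (auto intro!: *)
qed

lemma pent_tr: "pentomino B \<Longrightarrow> pentomino (tr a b ` B)"
  unfolding pentomino_def
  using connected_tr card_image inj_tr
  by (metis finite_imageI inj_on_subset subset_UNIV)

lemma conn_interval:
  assumes "(x, y) \<in> {(u, v). u \<in> S \<and> v \<in> S \<and> v \<in> nbrs u}\<^sup>*" "x \<in> S"
    and f: "\<forall>u v. v \<in> nbrs u \<longrightarrow> \<bar>f v - f u\<bar> \<le> (1::int)"
  shows "\<forall>t. f x \<le> t \<and> t \<le> f y \<longrightarrow> t \<in> f ` S"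
  using assms(1)
proof (induction rule: rtrancl_induct)
  case base
  then show ?case using assms(2) by force
next
  case (step y z)
  show ?case
  proof (intro allI impI)
    fix t assume t: "f x \<le> t \<and> t \<le> f z"
    show "t \<in> f ` S"
    proof (cases "t \<le> f y")
      case True then show ?thesis using step.IH t by blast
    next
      case False
      have "\<bar>f z - f y\<bar> \<le> 1" using f step.hyps(2) by blast
      then have "t = f z" using False t by linarith
      then show ?thesis using step.hyps(2) by blast
    qed
  qed
qed

lemma extent:
  assumes "pentomino B" "\<forall>u v. v \<in> nbrs u \<longrightarrow> \<bar>f v - f u\<bar> \<le> (1::int)" "x \<in> B"
  shows "f x \<le> Min (f ` B) + 4"
proof -
  have fin: "finite B" and c5: "card B = 5" and conn: "connected_cells B"
    using assms(1) by (auto simp: pentomino_def)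
  have ne: "B \<noteq> {}" using c5 by auto
  have "Min (f ` B) \<in> f ` B" using fin ne by simp
  then obtain a where a: "a \<in> B" "f a = Min (f ` B)" by auto
  have "(a, x) \<in> {(u, v). u \<in> B \<and> v \<in> B \<and> v \<in> nbrs u}\<^sup>*"
    using conn a assms(3) unfolding connected_cells_def by blast
  from conn_interval[OF this a(1) assms(2)]
  have "{f a..f x} \<subseteq> f ` B" by auto
  then have "card {f a..f x} \<le> card (f ` B)" using fin by (intro card_mono) auto
  also have "\<dots> \<le> card B" using fin by (rule card_image_le)
  finally have "nat (f x - f a + 1) \<le> 5" using c5 by (simp only: card_atLeastAtMost_int)
  then show ?thesis using a by linarith
qed

lemma nbrs_fst: "\<forall>u v. v \<in> nbrs u \<longrightarrow> \<bar>fst v - fst u\<bar> \<le> (1::int)"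
  by (auto simp: nbrs_def split: prod.splits)

lemma nbrs_snd: "\<forall>u v. v \<in> nbrs u \<longrightarrow> \<bar>snd v - snd u\<bar> \<le> (1::int)"
  by (auto simp: nbrs_def split: prod.splits)

lemma Min_tr_fst:
  assumes "finite B" "B \<noteq> {}"
  shows "Min (fst ` tr a b ` B) = Min (fst ` B) - a"
proof -
  have "fst ` tr a b ` B = (\<lambda>r. r - a) ` fst ` B"
    by (force simp: tr_def image_iff)
  moreover have "mono (\<lambda>r::int. r - a)" by (auto simp: mono_def)
  ultimately show ?thesis using mono_Min_commute[of "\<lambda>r::int. r - a" "fst ` B"] assms by simp
qed

lemma Min_tr_snd:
  assumes "finite B" "B \<noteq> {}"
  shows "Min (snd ` tr a b ` B) = Min (snd ` B) - b"
proof -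
  have "snd ` tr a b ` B = (\<lambda>r. r - b) ` snd ` B"
    by (force simp: tr_def image_iff)
  moreover have "mono (\<lambda>r::int. r - b)" by (auto simp: mono_def)
  ultimately show ?thesis using mono_Min_commute[of "\<lambda>r::int. r - b" "snd ` B"] assms by simp
qed

lemma norm_pent_type: "pentomino B \<Longrightarrow> norm_pent B \<in> pent_types"
proof -
  assume p: "pentomino B"
  then have "finite B" "B \<noteq> {}" by (auto simp: pentomino_def)
  then show ?thesis using p unfolding pent_types_def norm_pent_tr
    by (simp add: pent_tr Min_tr_fst Min_tr_snd)
qed

definition pa_step :: "(nat \<Rightarrow> nat) \<Rightarrow> nat \<Rightarrow> card list \<Rightarrow> nat \<Rightarrow> nat \<Rightarrow> card list \<times> bool \<Rightarrow> card list \<times> bool" where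
  "pa_step rho w T p = (\<lambda>k (ys, ok).
           let a = (p + (k div 5) * w + k mod 5) mod length ys;
               (c, ok') = print_stack (rho (4 + 2 * k)) (rho (5 + 2 * k)) (T ! k) (ys ! a)
           in (ys[a := c], ok \<and> ok'))"

lemma print_area_fold: "print_area rho w T p xs = fold (pa_step rho w T p) [0..<25] (xs, True)"
  unfolding print_area_def pa_step_def by (rule refl)

lemma pa_step_simp: "pa_step rho w T p k (ys, ok) =
   (let a = (p + (k div 5) * w + k mod 5) mod length ys in
     (ys[a := (if T ! k = None then ys ! a else T ! k)], ok \<and> (T ! k = None \<or> ys ! a = None)))"
  by (cases "T ! k") (simp_all add: pa_step_def print_stack_val Let_def)

lemma pa_step_simp2: "pa_step rho w T p k (ys, ok) =
     (ys[(p + ((k div 5) * w + k mod 5)) mod length ys :=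
        (if T ! k = None then ys ! ((p + ((k div 5) * w + k mod 5)) mod length ys) else T ! k)],
      ok \<and> (T ! k = None \<or> ys ! ((p + ((k div 5) * w + k mod 5)) mod length ys) = None))"
  by (simp add: pa_step_simp Let_def add.assoc)

lemma pa_equiv:
  assumes "length ys = q" "0 < q"
  shows "fold (pa_step rho w T ((j + s) mod q)) ks (shiftR s ys, ok) =
           (shiftR s (fst (fold (pa_step rho w T j) ks (ys, ok))), snd (fold (pa_step rho w T j) ks (ys, ok)))
         \<and> length (fst (fold (pa_step rho w T j) ks (ys, ok))) = q"
  using assms
proof (induction ks arbitrary: ys ok)
  case Nil then show ?case by simp
next
  case (Cons k ks)
  define d where "d = (k div 5) * w + k mod 5"
  define a where "a = (j + d) mod q"
  have aq: "a < q" using Cons.prems by (simp add: a_def)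
  have a': "((j + s) mod q + d) mod q = (a + s) mod q"
  proof -
    have "((j + s) mod q + d) mod q = (j + s + d) mod q" by (rule mod_add_left_eq)
    moreover have "(a + s) mod q = (j + d + s) mod q" unfolding a_def by (rule mod_add_left_eq)
    ultimately show ?thesis by (simp add: ac_simps)
  qed
  have nth: "shiftR s ys ! ((a + s) mod q) = ys ! a"
    using shiftR_nth[of a ys s] aq Cons.prems by simp
  define c where "c = (if T ! k = None then ys ! a else T ! k)"
  have upd: "(shiftR s ys)[(a + s) mod q := c] = shiftR s (ys[a := c])"
    using shiftR_update[of a ys s c] aq Cons.prems by simp
  have s1: "pa_step rho w T ((j + s) mod q) k (shiftR s ys, ok) = (shiftR s (ys[a := c]), ok \<and> (T ! k = None \<or> ys ! a = None))"
    by (simp only: pa_step_simp2 len_shiftR Cons.prems(1) d_def[symmetric] a' nth c_def[symmetric] upd)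
  have s2: "pa_step rho w T j k (ys, ok) = (ys[a := c], ok \<and> (T ! k = None \<or> ys ! a = None))"
    by (simp only: pa_step_simp2 Cons.prems(1) d_def[symmetric] a_def[symmetric] c_def[symmetric])
  show ?case using Cons.IH[of "ys[a := c]"] Cons.prems by (simp add: s1 s2)
qed

lemma print_area_equiv:
  assumes "length ys = q" "0 < q"
  shows "print_area rho w T ((j + s) mod q) (shiftR s ys) =
           (shiftR s (fst (print_area rho w T j ys)), snd (print_area rho w T j ys))"
    "length (fst (print_area rho w T j ys)) = q"
  using pa_equiv[OF assms] by (simp_all add: print_area_fold)



locale fc =
  fixes m n :: nat and clue :: "cell \<Rightarrow> nat option" and Ps :: "cell set set" and ts :: "cell set list"
  assumes sol: "is_solution m n clue Ps" and tsset: "set ts = pent_types"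
begin

definition cellq :: "nat \<Rightarrow> cell" where
  "cellq q = (int (q div (n + 4)), int (q mod (n + 4)))"

definition pos :: "cell \<Rightarrow> nat" where
  "pos x = nat (fst x) * (n + 4) + nat (snd x)"

definition val :: "cell set set \<Rightarrow> nat \<Rightarrow> card" where
  "val S q = (if \<exists>B\<in>S. cellq q \<in> B then Some (int (border_count Ps (cellq q))) else None)"

lemma B_grid: "B \<in> Ps \<Longrightarrow> B \<subseteq> grid m n"
  using sol unfolding is_solution_def by blast

lemma B_pent: "B \<in> Ps \<Longrightarrow> pentomino B"
  using sol unfolding is_solution_def by blast

lemma B_disj: "B \<in> Ps \<Longrightarrow> B' \<in> Ps \<Longrightarrow> B \<noteq> B' \<Longrightarrow> x \<in> B \<Longrightarrow> x \<notin> B'"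
  using sol unfolding is_solution_def by blast

lemma bc: "B \<in> Ps \<Longrightarrow> x \<in> B \<Longrightarrow> border_count Ps x = card (nbrs x - B)"
proof -
  assume B: "B \<in> Ps" and x: "x \<in> B"
  have "{y \<in> nbrs x. \<not> (\<exists>B'\<in>Ps. x \<in> B' \<and> y \<in> B')} = nbrs x - B"
    using B x B_disj by blast
  then show ?thesis by (simp add: border_count_def)
qed

lemma pos_lt: "x \<in> grid m n \<Longrightarrow> pos x < (m + 4) * (n + 4)"
proof -
  assume x: "x \<in> grid m n"
  obtain r c where rc: "x = (r, c)" by force
  have r: "nat r + 1 \<le> m + 4" and c: "nat c < n + 4" using x rc by (auto simp: grid_def)
  have "pos x < (nat r + 1) * (n + 4)" using c rc by (simp add: pos_def)
  also have "\<dots> \<le> (m + 4) * (n + 4)" using r by (intro mult_right_mono) auto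
  finally show ?thesis .
qed

lemma cellq_pos: "x \<in> grid m n \<Longrightarrow> cellq (pos x) = x"
proof -
  assume x: "x \<in> grid m n"
  obtain r c where rc: "x = (r, c)" by force
  have "0 \<le> r" "0 \<le> c" "nat c < n + 4" using x rc by (auto simp: grid_def)
  then show ?thesis using rc by (simp add: cellq_def pos_def)
qed

lemma pos_cellq: "pos (cellq q) = q"
  using div_mult_mod_eq[of q "n+4"] by (simp add: cellq_def pos_def)

lemma cellq_grid: "cellq q \<in> grid m n \<longleftrightarrow> q div (n + 4) < m \<and> q mod (n + 4) < n"
  by (auto simp: cellq_def grid_def)

definition loc :: "cell set \<Rightarrow> nat \<Rightarrow> cell" where
  "loc B k = (Min (fst ` B) + int (k div 5), Min (snd ` B) + int (k mod 5))"

lemma B_fin: "B \<in> Ps \<Longrightarrow> finite B"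
  using B_pent by (auto simp: pentomino_def)

lemma B_ne: "B \<in> Ps \<Longrightarrow> B \<noteq> {}"
proof
  assume a: "B \<in> Ps" "B = {}"
  then have "card B = 5" using B_pent pentomino_def by blast
  with a(2) show False by simp
qed

lemma min_bounds:
  assumes "B \<in> Ps"
  shows "0 \<le> Min (fst ` B)" "Min (fst ` B) < int m" "0 \<le> Min (snd ` B)" "Min (snd ` B) < int n"
proof -
  have "Min (fst ` B) \<in> fst ` B" "Min (snd ` B) \<in> snd ` B" using B_fin[OF assms] B_ne[OF assms] by simp_all
  then show "0 \<le> Min (fst ` B)" "Min (fst ` B) < int m" "0 \<le> Min (snd ` B)" "Min (snd ` B) < int n"
    using B_grid[OF assms] by (auto simp: grid_def)
qed

lemma in_bounds:
  assumes "B \<in> Ps" "x \<in> B"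
  shows "Min (fst ` B) \<le> fst x" "fst x \<le> Min (fst ` B) + 4" "Min (snd ` B) \<le> snd x" "snd x \<le> Min (snd ` B) + 4"
  using assms B_fin[OF assms(1)] extent[OF B_pent[OF assms(1)] nbrs_fst assms(2)]
    extent[OF B_pent[OF assms(1)] nbrs_snd assms(2)] by auto

lemma loc_inj: "loc B k = loc B k' \<Longrightarrow> k = k'"
  by (simp add: loc_def) (metis div_mult_mod_eq)

lemma cover:
  assumes "B \<in> Ps" "x \<in> B"
  shows "\<exists>k<25. loc B k = x"
proof -
  define a where "a = nat (fst x - Min (fst ` B))"
  define b where "b = nat (snd x - Min (snd ` B))"
  have a: "a \<le> 4" "int a = fst x - Min (fst ` B)" and b: "b \<le> 4" "int b = snd x - Min (snd ` B)"
    using in_bounds[OF assms] by (auto simp: a_def b_def)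
  have "(a * 5 + b) div 5 = a" "(a * 5 + b) mod 5 = b" using a b by auto
  then have "loc B (a * 5 + b) = x" using a b by (simp add: loc_def prod_eq_iff)
  moreover have "a * 5 + b < 25" using a b by linarith
  ultimately show ?thesis by blast
qed

lemma tmpl_nth:
  assumes "B \<in> Ps" "k < 25"
  shows "tmpl (norm_pent B) ! k = (if loc B k \<in> B then Some (int (border_count Ps (loc B k))) else None)"
proof -
  define t where "t = tr (Min (fst ` B)) (Min (snd ` B))"
  have np: "norm_pent B = t ` B" by (simp add: norm_pent_tr t_def)
  have x: "(int (k div 5), int (k mod 5)) = t (loc B k)" by (simp add: t_def tr_def loc_def)
  have mem: "t (loc B k) \<in> t ` B \<longleftrightarrow> loc B k \<in> B" by (simp add: t_def inj_image_mem_iff inj_tr)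
  have "{y \<in> nbrs (t (loc B k)). y \<notin> t ` B} = t ` (nbrs (loc B k) - B)"
  proof -
    have "t ` (nbrs (loc B k) - B) = t ` nbrs (loc B k) - t ` B"
      unfolding t_def by (rule image_set_diff[OF inj_tr])
    then show ?thesis by (auto simp: t_def tr_nbrs)
  qed
  then have cd: "card {y \<in> nbrs (t (loc B k)). y \<notin> t ` B} = card (nbrs (loc B k) - B)"
    by (simp add: t_def card_image inj_on_subset[OF inj_tr])
  show ?thesis
    using assms(2) unfolding tmpl_def np
    by (simp add: Let_def x mem cd bc[OF assms(1)])
qed

lemma loc_grid: "B \<in> Ps \<Longrightarrow> loc B k \<in> B \<Longrightarrow> loc B k \<in> grid m n"
  using B_grid by blast

lemma loc_pos:
  assumes "B \<in> Ps" "loc B k \<in> B"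
  shows "(topleft (n + 4) B + (k div 5 * (n + 4) + k mod 5)) mod ((m + 4) * (n + 4)) = pos (loc B k)"
proof -
  have "pos (loc B k) = topleft (n + 4) B + (k div 5 * (n + 4) + k mod 5)"
    using min_bounds[OF assms(1)]
    by (simp add: pos_def loc_def topleft_def nat_add_distrib algebra_simps)
  moreover have "pos (loc B k) < (m + 4) * (n + 4)" using pos_lt loc_grid assms by blast
  ultimately show ?thesis by simp
qed


definition D :: "cell set \<Rightarrow> nat \<Rightarrow> nat set" where
  "D B k = {pos (loc B k') | k'. k' < k \<and> loc B k' \<in> B}"

definition gval :: "cell set \<Rightarrow> cell set set \<Rightarrow> nat \<Rightarrow> nat \<Rightarrow> card" where
  "gval B S k q = (if q \<in> D B k then Some (int (border_count Ps (cellq q))) else val S q)"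

lemma pa_inv:
  assumes B: "B \<in> Ps" and S: "S \<subseteq> Ps" "B \<notin> S" and k: "k \<le> 25"
  shows "fold (pa_step rho (n + 4) (tmpl (norm_pent B)) (topleft (n + 4) B)) [0..<k]
           (map (val S) [0..<(m + 4) * (n + 4)], True) = (map (gval B S k) [0..<(m + 4) * (n + 4)], True)"
  using k
proof (induction k)
  case 0
  have "map (val S) [0..<(m + 4) * (n + 4)] = map (gval B S 0) [0..<(m + 4) * (n + 4)]"
    by (simp add: gval_def D_def)
  then show ?case by simp
next
  case (Suc k)
  then have k25: "k < 25" by simp
  let ?L = "(m + 4) * (n + 4)"
  let ?ys = "map (gval B S k) [0..<?L]"
  let ?T = "tmpl (norm_pent B)"
  let ?a = "(topleft (n + 4) B + (k div 5 * (n + 4) + k mod 5)) mod length ?ys"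
  have IH: "fold (pa_step rho (n + 4) ?T (topleft (n + 4) B)) [0..<Suc k]
           (map (val S) [0..<?L], True) = pa_step rho (n + 4) ?T (topleft (n + 4) B) k (?ys, True)"
    using Suc by simp
  show ?case
  proof (cases "loc B k \<in> B")
    case True
    have a: "?a = pos (loc B k)" using loc_pos[OF B True] by simp
    have aL: "pos (loc B k) < ?L" using pos_lt loc_grid[OF B True] by blast
    have ca: "cellq (pos (loc B k)) = loc B k" using cellq_pos loc_grid[OF B True] by blast
    have Tk: "?T ! k = Some (int (border_count Ps (loc B k)))" using tmpl_nth[OF B k25] True by simp
    have notD: "pos (loc B k) \<notin> D B k"
    proof
      assume "pos (loc B k) \<in> D B k"
      then have "\<exists>k'. pos (loc B k) = pos (loc B k') \<and> k' < k \<and> loc B k' \<in> B"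
        unfolding D_def by (rule CollectD)
      then obtain k' where k': "k' < k" "loc B k' \<in> B" "pos (loc B k') = pos (loc B k)"
        by auto
      have c': "cellq (pos (loc B k')) = loc B k'" by (rule cellq_pos[OF loc_grid[OF B k'(2)]])
      have "loc B k' = loc B k" using trans[OF sym[OF c'] trans[OF arg_cong[OF k'(3), of cellq] ca]] .
      then show False using loc_inj k' by blast
    qed
    have valN: "val S (pos (loc B k)) = None"
    proof -
      have "\<not> (\<exists>B'\<in>S. loc B k \<in> B')" using True B_disj[OF B] S by blast
      then show ?thesis by (simp add: val_def ca)
    qed
    have ysa: "?ys ! pos (loc B k) = None"
      using aL notD valN by (simp add: gval_def)
    have DS: "D B (Suc k) = insert (pos (loc B k)) (D B k)"
      using True by (auto simp: D_def less_Suc_eq)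
    have "?ys[pos (loc B k) := Some (int (border_count Ps (loc B k)))] = map (gval B S (Suc k)) [0..<?L]"
      by (rule nth_equalityI) (use notD aL in \<open>auto simp: nth_list_update gval_def DS ca\<close>)
    then show ?thesis unfolding IH pa_step_simp2 a using ysa Tk by simp
  next
    case False
    have Tk: "?T ! k = None" using tmpl_nth[OF B k25] False by simp
    have DS: "D B (Suc k) = D B k"
      using False by (auto simp: D_def less_Suc_eq)
    have g: "gval B S (Suc k) = gval B S k" by (rule ext) (simp add: gval_def DS)
    show ?thesis unfolding IH pa_step_simp2 g using Tk by (simp del: nth_map)
  qed
qed

lemma pa_main:
  assumes B: "B \<in> Ps" and S: "S \<subseteq> Ps" "B \<notin> S"
  shows "print_area rho (n + 4) (tmpl (norm_pent B)) (topleft (n + 4) B) (map (val S) [0..<(m + 4) * (n + 4)])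
       = (map (val (insert B S)) [0..<(m + 4) * (n + 4)], True)"
proof -
  have "map (gval B S 25) [0..<(m + 4) * (n + 4)] = map (val (insert B S)) [0..<(m + 4) * (n + 4)]"
  proof (rule map_cong[OF refl])
    fix q assume "q \<in> set [0..<(m + 4) * (n + 4)]"
    have iff: "q \<in> D B 25 \<longleftrightarrow> cellq q \<in> B"
    proof
      assume "q \<in> D B 25"
      then have "\<exists>k'. q = pos (loc B k') \<and> k' < 25 \<and> loc B k' \<in> B"
        unfolding D_def by (rule CollectD)
      then obtain k' where k': "loc B k' \<in> B" "q = pos (loc B k')" by auto
      have "cellq (pos (loc B k')) = loc B k'" by (rule cellq_pos[OF loc_grid[OF B k'(1)]])
      then show "cellq q \<in> B" using k' by simp
    next
      assume c: "cellq q \<in> B"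
      obtain k' where k': "k' < 25" "loc B k' = cellq q" using cover[OF B c] by blast
      have qk: "q = pos (loc B k')" using k'(2) pos_cellq[of q] by simp
      have lb: "loc B k' \<in> B" using k'(2) c by simp
      show "q \<in> D B 25" unfolding D_def using qk lb k'(1) by blast
    qed
    show "gval B S 25 q = val (insert B S) q"
      using iff by (auto simp: gval_def val_def)
  qed
  then show ?thesis using pa_inv[OF B S, of 25 rho] by (simp add: print_area_fold)
qed

lemma tidx_ok:
  assumes "B \<in> Ps"
  shows "tidx ts (norm_pent B) < length ts" "ts ! tidx ts (norm_pent B) = norm_pent B"
proof -
  have "norm_pent B \<in> set ts" using tsset norm_pent_type B_pent[OF assms] by simp
  then obtain i where "i < length ts" "ts ! i = norm_pent B" by (auto simp: in_set_conv_nth)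
  then have ne: "filter (\<lambda>k. ts ! k = norm_pent B) [0..<length ts] \<noteq> []"
    by (auto simp: filter_empty_conv)
  have "tidx ts (norm_pent B) \<in> set (filter (\<lambda>k. ts ! k = norm_pent B) [0..<length ts])"
    unfolding tidx_def using ne by (rule hd_in_set)
  then show "tidx ts (norm_pent B) < length ts" "ts ! tidx ts (norm_pent B) = norm_pent B" by auto
qed

lemma topleft_lt: "B \<in> Ps \<Longrightarrow> topleft (n + 4) B < (m + 4) * (n + 4)"
proof -
  assume B: "B \<in> Ps"
  have g: "(Min (fst ` B), Min (snd ` B)) \<in> grid m n" using min_bounds[OF B] by (simp add: grid_def)
  have "topleft (n + 4) B = pos (Min (fst ` B), Min (snd ` B))" by (simp add: topleft_def pos_def)
  then show ?thesis using pos_lt[OF g] by simp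
qed

lemma round:
  assumes B: "B \<in> Ps" and S: "S \<subseteq> Ps" "B \<notin> S"
  shows "five_cells_round ts (n + 4) rho (topleft (n + 4) B) (tidx ts (norm_pent B))
           (map (val S) [0..<(m + 4) * (n + 4)], map tmpl ts)
         = ((map (val (insert B S)) [0..<(m + 4) * (n + 4)], map tmpl ts), True)"
proof -
  let ?L = "(m + 4) * (n + 4)"
  let ?ti = "tidx ts (norm_pent B)"
  let ?pile = "map tmpl ts"
  let ?xs = "map (val S) [0..<?L]"
  let ?T = "tmpl (norm_pent B)"
  let ?j = "topleft (n + 4) B"
  have ti: "?ti < length ?pile" "?pile ! ?ti = ?T" using tidx_ok[OF B] by simp_all
  have inner: "chosen_cut (rho 2) (rho 3) ?ti ?pile (\<lambda>p' prow. (prow[p' := []], print_area rho (n + 4) (prow ! p') p row))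
     = (?pile[?ti := []], print_area rho (n + 4) (?pile ! ?ti) p row)" for p row
    by (rule chosen_cut_upd[where g = "\<lambda>_. []" and h = "\<lambda>T. print_area rho (n + 4) T p row"]) (use ti in auto)
  have Lpos: "0 < ?L" by simp
  have jL: "?j < length ?xs" using topleft_lt[OF B] by simp
  have outer: "chosen_cut (rho 0) (rho 1) ?j ?xs
     (\<lambda>p row. (fst (print_area rho (n + 4) ?T p row), ?pile[?ti := []], snd (print_area rho (n + 4) ?T p row)))
     = (fst (print_area rho (n + 4) ?T ?j ?xs), ?pile[?ti := []], snd (print_area rho (n + 4) ?T ?j ?xs))"
    by (rule chosen_cut_equiv) (use jL print_area_equiv[of ?xs "length ?xs" rho "n + 4" ?T ?j] in auto)
  have upd: "(?pile[?ti := []])[?ti := tmpl (ts ! ?ti)] = ?pile"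
  proof -
    have "(?pile[?ti := []])[?ti := tmpl (ts ! ?ti)] = ?pile[?ti := ?pile ! ?ti]" using ti(1) by simp
    also have "\<dots> = ?pile" by (rule list_update_id)
    finally show ?thesis .
  qed
  have upd2: "?pile[?ti := tmpl (ts ! ?ti)] = ?pile"
    using upd ti(1) by simp
  show ?thesis
    unfolding five_cells_round_def
    apply (simp only: Let_def inner ti(2) prod.case)
    apply (simp only: prod.case_eq_if)
    apply (simp only: outer)
    apply (simp add: upd upd2 pa_main[OF B S] templates_ok_def)
    done
qed


definition fstep :: "(nat \<Rightarrow> nat \<Rightarrow> nat) \<Rightarrow> nat \<times> cell set \<Rightarrow> (card list \<times> card list list) \<times> bool
    \<Rightarrow> (card list \<times> card list list) \<times> bool" where
  "fstep R = (\<lambda>(i, B) (st, ok). let (st', ok') = five_cells_round ts (n + 4) (R i) (topleft (n + 4) B) (tidx ts (norm_pent B)) st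
                   in (st', ok \<and> ok'))"

lemma fold_rounds:
  "distinct (map snd Cs) \<Longrightarrow> set (map snd Cs) \<subseteq> Ps \<Longrightarrow> S \<subseteq> Ps \<Longrightarrow> S \<inter> set (map snd Cs) = {} \<Longrightarrow>
   fold (fstep R) Cs ((map (val S) [0..<(m + 4) * (n + 4)], map tmpl ts), True)
     = ((map (val (S \<union> set (map snd Cs))) [0..<(m + 4) * (n + 4)], map tmpl ts), True)"
proof (induction Cs arbitrary: S)
  case Nil then show ?case by simp
next
  case (Cons c Cs)
  obtain i B where c: "c = (i, B)" by force
  have B: "B \<in> Ps" "B \<notin> S" using Cons.prems c by auto
  have st: "fstep R c ((map (val S) [0..<(m + 4) * (n + 4)], map tmpl ts), True)
      = ((map (val (insert B S)) [0..<(m + 4) * (n + 4)], map tmpl ts), True)"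
    unfolding c fstep_def using round[OF B(1) Cons.prems(3) B(2)] by simp
  have "fold (fstep R) Cs ((map (val (insert B S)) [0..<(m + 4) * (n + 4)], map tmpl ts), True)
     = ((map (val (insert B S \<union> set (map snd Cs))) [0..<(m + 4) * (n + 4)], map tmpl ts), True)"
    using Cons.prems c B by (intro Cons.IH) auto
  moreover have "insert B S \<union> set (map snd Cs) = S \<union> set (map snd (c # Cs))" using c by auto
  ultimately show ?case using st by simp
qed

end

theorem lemma1:
  fixes m n :: nat
    and clue :: "cell \<Rightarrow> nat option"
    and ts :: "cell set list"
    and Ps :: "cell set set"
    and Bs :: "cell set list"
    and R :: "nat \<Rightarrow> nat \<Rightarrow> nat"
  assumes "\<forall>x. clue x \<noteq> None \<longrightarrow> x \<in> grid m n"
    and "distinct ts" and "set ts = pent_types"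
    and "is_solution m n clue Ps"
    and "distinct Bs" and "set Bs = Ps"
  shows "five_cells_accepts m n clue ts Bs R"
proof -
  interpret fc m n clue Ps ts using assms(3,4) by unfold_locales
  let ?L = "(m + 4) * (n + 4)"
  have z: "map snd (zip [0..<length Bs] Bs) = Bs" by simp
  have v0: "val {} = (\<lambda>q. None)" by (rule ext) (simp add: fc.val_def[OF fc_axioms])
  have r0: "replicate ?L None = map (val {}) [0..<?L]"
    unfolding v0 by (simp add: map_replicate_const)
  have fr: "fold (fstep R) (zip [0..<length Bs] Bs) ((replicate ?L None, map tmpl ts), True)
        = ((map (val Ps) [0..<?L], map tmpl ts), True)"
    using fold_rounds[of "zip [0..<length Bs] Bs" "{}" R] assms(5,6) unfolding z r0 by simp
  have tok: "templates_ok ts (map tmpl ts)" by (simp add: templates_ok_def)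
  have fin: "\<forall>q < ?L. let r = q div (n + 4); c = q mod (n + 4) in
           if r < m \<and> c < n
           then (case clue (int r, int c) of None \<Rightarrow> True | Some v \<Rightarrow> map (val Ps) [0..<?L] ! q = Some (int v))
           else map (val Ps) [0..<?L] ! q = None"
  proof (intro allI impI)
    fix q assume q: "q < ?L"
    have cq: "cellq q = (int (q div (n + 4)), int (q mod (n + 4)))" by (simp add: cellq_def)
    show "let r = q div (n + 4); c = q mod (n + 4) in
           if r < m \<and> c < n
           then (case clue (int r, int c) of None \<Rightarrow> True | Some v \<Rightarrow> map (val Ps) [0..<?L] ! q = Some (int v))
           else map (val Ps) [0..<?L] ! q = None"
    proof (cases "q div (n + 4) < m \<and> q mod (n + 4) < n")
      case True
      then have g: "cellq q \<in> grid m n" by (simp add: cellq_grid)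
      then have ex: "\<exists>B\<in>Ps. cellq q \<in> B" using sol unfolding is_solution_def by blast
      have "clue (cellq q) = Some v \<Longrightarrow> border_count Ps (cellq q) = v" for v
        using sol unfolding is_solution_def by blast
      then show ?thesis using True q ex
        by (auto simp: Let_def val_def cq[symmetric] split: option.split)
    next
      case False
      then have g: "cellq q \<notin> grid m n" by (simp add: cellq_grid)
      then have "\<not> (\<exists>B\<in>Ps. cellq q \<in> B)" using B_grid by blast
      then have "map (val Ps) [0..<?L] ! q = None" using q by (simp add: val_def)
      then show ?thesis unfolding Let_def if_not_P[OF False] .
    qed
  qed
  show ?thesis
    unfolding five_cells_accepts_def Let_def fstep_def[unfolded Let_def, symmetric]
    using fr tok fin by (simp add: Let_def)
qed

end
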